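(* Let $G$ be a 2-arc-colored directed multigraph. If $C$ is a minimal PC Euler subgraph of $G$, then $C$ is a PC circuit.
   Context: $G$ has an arbitrary arc coloring $\phi:A(G)\to\{1,2\}$. Trails are directed walks without repeated arcs; a closed trail is properly colored (PC) if every two consecutive arcs, including the last and first arcs, have different colors. A (multi)digraph is PC Euler if it has a PC closed trail containing all of its arcs. A PC Euler subgraph of $G$ is a subgraph (with at least one arc) that is PC Euler; it is minimal if no proper subgraph of it is PC Euler. A PC circuit is a subgraph $C$ of $G$ that is PC Euler and satisfies $d^+_{1,C}(v)\le1$ and $d^+_{2,C}(v)\le 1$ for all $v\in V(C)$, where $d^+_{i,C}(v)$ is the number of arcs of color $i$ in $C$ leaving $v$. *)

theory Defs
  imports Main
begin

(* A directed multigraph is given by a set of arcs A :: 'b set together with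
   tail and head maps to vertices 'a; parallel arcs and loops are allowed.
   A subgraph is identified with its arc set C \<subseteq> A (its vertices being the
   endpoints of its arcs). *)

definition pc_closed_trail ::
  "('b \<Rightarrow> 'a) \<Rightarrow> ('b \<Rightarrow> 'a) \<Rightarrow> ('b \<Rightarrow> nat) \<Rightarrow> 'b list \<Rightarrow> bool" where
  "pc_closed_trail tail head phi es \<longleftrightarrow>
     es \<noteq> [] \<and> distinct es \<and>
     (\<forall>i < length es. head (es ! i) = tail (es ! ((i + 1) mod length es)) \<and>
                       phi (es ! i) \<noteq> phi (es ! ((i + 1) mod length es)))"

definition pc_euler ::
  "('b \<Rightarrow> 'a) \<Rightarrow> ('b \<Rightarrow> 'a) \<Rightarrow> ('b \<Rightarrow> nat) \<Rightarrow> 'b set \<Rightarrow> bool" where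
  "pc_euler tail head phi C \<longleftrightarrow> (\<exists>es. pc_closed_trail tail head phi es \<and> set es = C)"

definition pc_euler_subgraph ::
  "'b set \<Rightarrow> ('b \<Rightarrow> 'a) \<Rightarrow> ('b \<Rightarrow> 'a) \<Rightarrow> ('b \<Rightarrow> nat) \<Rightarrow> 'b set \<Rightarrow> bool" where
  "pc_euler_subgraph A tail head phi C \<longleftrightarrow> C \<subseteq> A \<and> C \<noteq> {} \<and> pc_euler tail head phi C"

definition minimal_pc_euler_subgraph ::
  "'b set \<Rightarrow> ('b \<Rightarrow> 'a) \<Rightarrow> ('b \<Rightarrow> 'a) \<Rightarrow> ('b \<Rightarrow> nat) \<Rightarrow> 'b set \<Rightarrow> bool" where
  "minimal_pc_euler_subgraph A tail head phi C \<longleftrightarrow>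
     pc_euler_subgraph A tail head phi C \<and>
     (\<forall>D. D \<subset> C \<longrightarrow> \<not> pc_euler_subgraph A tail head phi D)"

definition out_deg_col ::
  "('b \<Rightarrow> 'a) \<Rightarrow> ('b \<Rightarrow> nat) \<Rightarrow> 'b set \<Rightarrow> nat \<Rightarrow> 'a \<Rightarrow> nat" where
  "out_deg_col tail phi C i v = card {e \<in> C. tail e = v \<and> phi e = i}"

definition pc_circuit ::
  "'b set \<Rightarrow> ('b \<Rightarrow> 'a) \<Rightarrow> ('b \<Rightarrow> 'a) \<Rightarrow> ('b \<Rightarrow> nat) \<Rightarrow> 'b set \<Rightarrow> bool" where
  "pc_circuit A tail head phi C \<longleftrightarrow>
     pc_euler_subgraph A tail head phi C \<and>
     (\<forall>v \<in> tail ` C \<union> head ` C. out_deg_col tail phi C 1 v \<le> 1 \<and> out_deg_col tail phi C 2 v \<le> 1)"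

end

theory Submission
  imports Defs
begin

lemma split_trail:
  assumes tr: "pc_closed_trail tail head phi es"
    and ij: "i < j" "j < length es"
    and eq: "tail (es ! i) = tail (es ! j)" "phi (es ! i) = phi (es ! j)"
  shows "pc_closed_trail tail head phi (take (j - i) (drop i es))"
proof -
  let ?L = "length es"
  let ?ds = "take (j - i) (drop i es)"
  have len: "length ?ds = j - i" using ij by simp
  have nth: "\<And>k. k < j - i \<Longrightarrow> ?ds ! k = es ! (i + k)" using ij by simp
  from tr have D: "distinct es" and C: "\<And>k. k < ?L \<Longrightarrow> head (es ! k) = tail (es ! ((k + 1) mod ?L)) \<and>
       phi (es ! k) \<noteq> phi (es ! ((k + 1) mod ?L))"
    unfolding pc_closed_trail_def by auto
  have "distinct ?ds" using D by (simp add: distinct_take distinct_drop)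
  moreover have "?ds \<noteq> []" using ij by simp
  moreover have "\<forall>k < length ?ds. head (?ds ! k) = tail (?ds ! ((k + 1) mod length ?ds)) \<and>
                       phi (?ds ! k) \<noteq> phi (?ds ! ((k + 1) mod length ?ds))"
  proof (intro allI impI)
    fix k assume k: "k < length ?ds"
    show "head (?ds ! k) = tail (?ds ! ((k + 1) mod length ?ds)) \<and>
                       phi (?ds ! k) \<noteq> phi (?ds ! ((k + 1) mod length ?ds))"
    proof (cases "k + 1 < j - i")
      case True
      have m1: "(k + 1) mod length ?ds = k + 1" using True len by simp
      have m2: "(i + k + 1) mod ?L = i + k + 1" using True ij by simp
      have "i + k < ?L" using True ij by simp
      from C[OF this] m2 have "head (es ! (i+k)) = tail (es ! (i+k+1)) \<and> phi (es ! (i+k)) \<noteq> phi (es ! (i+k+1))" by simp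
      moreover have "?ds ! k = es ! (i+k)" "?ds ! (k+1) = es ! (i+k+1)" using True ij by simp_all
      ultimately show ?thesis using m1 by simp
    next
      case False
      hence kk: "k = j - i - 1" using k len by linarith
      have "k + 1 = length ?ds" using kk len ij by simp
      hence m1: "(k + 1) mod length ?ds = 0" by simp
      have ik: "i + k = j - 1" using kk ij by simp
      have m2: "(j - 1 + 1) mod ?L = j" using ij by simp
      have "j - 1 < ?L" using ij by simp
      from C[OF this] m2 have "head (es ! (j-1)) = tail (es ! j) \<and> phi (es ! (j-1)) \<noteq> phi (es ! j)" by simp
      have n0: "?ds ! 0 = es ! i" using ij by simp
      have nk: "?ds ! k = es ! (j - 1)" using ij ik by simp
      show ?thesis using m1 n0 nk eq \<open>head (es ! (j-1)) = tail (es ! j) \<and> phi (es ! (j-1)) \<noteq> phi (es ! j)\<close> by simp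
    qed
  qed
  ultimately show ?thesis unfolding pc_closed_trail_def by blast
qed

lemma no_dup:
  assumes tr: "pc_closed_trail tail head phi es"
    and C: "set es = C" and CA: "C \<subseteq> A"
    and mn: "\<forall>D. D \<subset> C \<longrightarrow> \<not> pc_euler_subgraph A tail head phi D"
    and ij: "i < j" "j < length es"
    and eq: "tail (es ! i) = tail (es ! j)" "phi (es ! i) = phi (es ! j)"
  shows False
proof -
  let ?ds = "take (j - i) (drop i es)"
  have t: "pc_closed_trail tail head phi ?ds" using split_trail[OF tr ij eq] .
  have D: "distinct es" using tr unfolding pc_closed_trail_def by auto
  have sub: "set ?ds \<subseteq> set es" by (meson set_drop_subset set_take_subset subset_trans)
  have "es ! j \<notin> set ?ds"
  proof
    assume "es ! j \<in> set ?ds"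
    then obtain k where k: "k < length ?ds" "?ds ! k = es ! j" by (auto simp: in_set_conv_nth)
    hence "es ! (i + k) = es ! j" "i + k < j" using ij by auto
    thus False using D ij nth_eq_iff_index_eq by fastforce
  qed
  moreover have "es ! j \<in> set es" using ij by simp
  ultimately have ps: "set ?ds \<subset> C" using sub C by blast
  have "?ds \<noteq> []" using t unfolding pc_closed_trail_def by simp
  hence "pc_euler_subgraph A tail head phi (set ?ds)"
    unfolding pc_euler_subgraph_def pc_euler_def using t ps CA by auto
  thus False using mn ps by blast
qed

theorem corollary1:
  fixes A :: "'b set" and tail head :: "'b \<Rightarrow> 'a" and phi :: "'b \<Rightarrow> nat" and C :: "'b set"
  assumes "finite A"
    and "\<forall>e \<in> A. phi e \<in> {1, 2}"
    and "minimal_pc_euler_subgraph A tail head phi C"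
  shows "pc_circuit A tail head phi C"
proof -
  have se: "pc_euler_subgraph A tail head phi C" and mn: "\<forall>D. D \<subset> C \<longrightarrow> \<not> pc_euler_subgraph A tail head phi D"
    using assms(3) unfolding minimal_pc_euler_subgraph_def by auto
  then have CA: "C \<subseteq> A" and "pc_euler tail head phi C" unfolding pc_euler_subgraph_def by auto
  then obtain es where tr: "pc_closed_trail tail head phi es" and Cs: "set es = C"
    unfolding pc_euler_def by auto
  have key: "\<And>x y. x \<in> C \<Longrightarrow> y \<in> C \<Longrightarrow> tail x = tail y \<Longrightarrow> phi x = phi y \<Longrightarrow> x = y"
  proof (rule ccontr)
    fix x y assume xy: "x \<in> C" "y \<in> C" "tail x = tail y" "phi x = phi y" "x \<noteq> y"
    obtain a where a: "a < length es" "es ! a = x" using xy Cs by (auto simp: in_set_conv_nth)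
    obtain b where b: "b < length es" "es ! b = y" using xy Cs by (auto simp: in_set_conv_nth)
    have "a \<noteq> b" using a b xy by auto
    then consider "a < b" | "b < a" by linarith
    then show False
    proof cases
      case 1 thus False using no_dup[OF tr Cs CA mn 1 b(1)] a b xy by auto
    next
      case 2 thus False using no_dup[OF tr Cs CA mn 2 a(1)] a b xy by auto
    qed
  qed
  have fin: "finite C" using CA assms(1) finite_subset by blast
  have deg: "out_deg_col tail phi C i v \<le> 1" for i v
  proof -
    have "finite {e \<in> C. tail e = v \<and> phi e = i}" using fin by simp
    moreover have "\<forall>x\<in>{e \<in> C. tail e = v \<and> phi e = i}. \<forall>y\<in>{e \<in> C. tail e = v \<and> phi e = i}. x = y"
      using key by auto
    ultimately show ?thesis unfolding out_deg_col_def by (simp add: card_le_Suc0_iff_eq)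
  qed
  show ?thesis unfolding pc_circuit_def using se deg by auto
qed

end
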